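(* Let $\Lambda\in\mathbb{R}^{n\times n}$ be diagonal with entries $\lambda_{ii}\in[0,1]$, let $W^{(1)},W^{(2)}\in\mathbb{R}^{n\times n}$ be entrywise nonnegative with $W^{(1)}+W^{(2)}$ row-stochastic, and $s\in\mathbb{R}^n$. Consider the FJ-MM system $$x(t+1)=\Lambda\big(W^{(1)}x(t)+W^{(2)}x(t-1)\big)+(I-\Lambda)s \tag{A}$$ and the comparison FJ system $$x(t+1)=\bar A x(t)+(I-\Lambda)s,\qquad \bar A:=\Lambda\big(W^{(1)}+W^{(2)}\big). \tag{B}$$ The following are equivalent: (i) system (A) is exponentially stable, i.e. $\rho(\bar A_d)<1$ where $\bar A_d:=\begin{pmatrix}0 & I\\ \Lambda W^{(2)} & \Lambda W^{(1)}\end{pmatrix}\in\mathbb{R}^{2n\times 2n}$; (ii) system (B) is exponentially stable, i.e. $\rho(\bar A)<1$; (iii) the set $\hat{\mathcal V}:=\{i:\lambda_{ii}<1\}$ is non-empty and globally reachable in the directed graph $\mathcal G[W^{(1)}+W^{(2)}]$ (in particular this holds if $\lambda_{ii}<1$ for all $i$). Moreover, if (i)–(iii) hold, then $I-\bar A$ is invertible and every solution of (A) (for any initial data $x(-1),x(0)$) and every solution of (B) converges to $$\bar x=(I-\bar A)^{-1}(I-\Lambda)s,$$ which is the unique equilibrium of both systems.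
   Context: $\rho(M)$ denotes the spectral radius. For an entrywise nonnegative $n\times n$ matrix $W=(w_{ij})$, $\mathcal G[W]$ is the directed graph on nodes $\{1,\dots,n\}$ with an edge $(i,j)$ iff $w_{ij}>0$. A set of nodes $S$ is globally reachable if from every node there is a directed walk (possibly of length zero) to some node of $S$. System (A) is equivalent to $y(t)=\bar A_d y(t-1)+\begin{pmatrix}0\\(I-\Lambda)s\end{pmatrix}$ with $y(t-1)=(x(t-1)^\top,x(t)^\top)^\top$. *)

theory Defs
  imports "Jordan_Normal_Form.Spectral_Radius" "Jordan_Normal_Form.Gauss_Jordan_Elimination"
begin

definition graph_edges :: "nat \<Rightarrow> real mat \<Rightarrow> (nat \<times> nat) set" where
  "graph_edges n W = {(i,j). i < n \<and> j < n \<and> W $$ (i,j) > 0}"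

definition globally_reachable :: "nat \<Rightarrow> real mat \<Rightarrow> nat set \<Rightarrow> bool" where
  "globally_reachable n W S \<longleftrightarrow> (\<forall>i<n. \<exists>j\<in>S. (i,j) \<in> (graph_edges n W)\<^sup>*)"

definition row_stochastic :: "nat \<Rightarrow> real mat \<Rightarrow> bool" where
  "row_stochastic n W \<longleftrightarrow> (\<forall>i<n. (\<Sum>j<n. W $$ (i,j)) = 1)"

definition nonneg_mat :: "real mat \<Rightarrow> bool" where
  "nonneg_mat W \<longleftrightarrow> (\<forall>i<dim_row W. \<forall>j<dim_col W. W $$ (i,j) \<ge> 0)"

definition rho :: "real mat \<Rightarrow> real" where
  "rho A = spectral_radius (map_mat complex_of_real A)"

definition Abar :: "real mat \<Rightarrow> real mat \<Rightarrow> real mat \<Rightarrow> real mat" where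
  "Abar L W1 W2 = L * (W1 + W2)"

definition Abar_d :: "nat \<Rightarrow> real mat \<Rightarrow> real mat \<Rightarrow> real mat \<Rightarrow> real mat" where
  "Abar_d n L W1 W2 = four_block_mat (0\<^sub>m n n) (1\<^sub>m n) (L * W2) (L * W1)"

end

theory Submission
  imports Defs
begin


fun uu :: "nat \<Rightarrow> (nat \<Rightarrow> nat \<Rightarrow> real) \<Rightarrow> nat \<Rightarrow> nat \<Rightarrow> real" where
  "uu n a 0 i = 1"
| "uu n a (Suc k) i = (\<Sum>j<n. a i j * uu n a k j)"

locale core =
  fixes n :: nat and a :: "nat \<Rightarrow> nat \<Rightarrow> real"
  assumes nn: "\<And>i j. i < n \<Longrightarrow> j < n \<Longrightarrow> 0 \<le> a i j"
    and rs: "\<And>i. i < n \<Longrightarrow> (\<Sum>j<n. a i j) \<le> 1"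
begin

lemma u_nonneg: "i < n \<Longrightarrow> 0 \<le> uu n a k i"
proof (induction k arbitrary: i)
  case 0 then show ?case by simp
next
  case (Suc k) then show ?case by (auto intro!: sum_nonneg mult_nonneg_nonneg nn)
qed

lemma u_dec: "i < n \<Longrightarrow> uu n a (Suc k) i \<le> uu n a k i"
proof (induction k arbitrary: i)
  case 0 then show ?case using rs by simp
next
  case (Suc k)
  have "uu n a (Suc (Suc k)) i = (\<Sum>j<n. a i j * uu n a (Suc k) j)" by simp
  also have "\<dots> \<le> (\<Sum>j<n. a i j * uu n a k j)"
    using Suc.prems by (intro sum_mono mult_left_mono Suc.IH nn) auto
  finally show ?case by simp
qed

lemma u_antimono: "k \<le> m \<Longrightarrow> i < n \<Longrightarrow> uu n a m i \<le> uu n a k i"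
proof (induction m rule: dec_induct)
  case base then show ?case by simp
next
  case (step m) then show ?case using u_dec[of i m] by linarith
qed

lemma u_scale:
  assumes D: "\<And>i. i < n \<Longrightarrow> uu n a D i \<le> c"
  shows "i < n \<Longrightarrow> uu n a (D + k) i \<le> c * uu n a k i"
proof (induction k arbitrary: i)
  case 0 then show ?case using D by simp
next
  case (Suc k)
  have "uu n a (D + Suc k) i = (\<Sum>j<n. a i j * uu n a (D + k) j)" by simp
  also have "\<dots> \<le> (\<Sum>j<n. a i j * (c * uu n a k j))"
    using Suc.prems by (intro sum_mono mult_left_mono Suc.IH nn) auto
  also have "\<dots> = c * uu n a (Suc k) i" by (simp add: sum_distrib_left algebra_simps)
  finally show ?case .
qed

lemma u_pow:
  assumes D: "\<And>i. i < n \<Longrightarrow> uu n a D i \<le> c" and c: "0 \<le> c"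
  shows "i < n \<Longrightarrow> uu n a (m * D) i \<le> c ^ m"
proof (induction m arbitrary: i)
  case 0 then show ?case by simp
next
  case (Suc m)
  have "uu n a (Suc m * D) i = uu n a (D + m * D) i" by (simp add: add.commute)
  also have "\<dots> \<le> c * uu n a (m * D) i" by (rule u_scale[OF D Suc.prems])
  also have "\<dots> \<le> c * c ^ m" by (intro mult_left_mono Suc.IH Suc.prems c)
  finally show ?case by simp
qed

lemma u_decay:
  assumes ex: "\<forall>i<n. \<exists>d. uu n a d i < 1" and i: "i < n"
  shows "(\<lambda>k. uu n a k i) \<longlonglongrightarrow> 0"
proof -
  from ex obtain d where d: "\<And>i. i < n \<Longrightarrow> uu n a (d i) i < 1" by metis
  define D where "D = Suc (\<Sum>i<n. d i)"
  have dD: "d i \<le> D" if "i < n" for i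
  proof -
    have "d i \<le> (\<Sum>i<n. d i)" using that by (intro member_le_sum) auto
    then show ?thesis unfolding D_def by simp
  qed
  have uD: "uu n a D i < 1" if "i < n" for i
    using u_antimono[OF dD[OF that] that] d[OF that] by linarith
  define c where "c = Max ((\<lambda>i. uu n a D i) ` {..<n})"
  have ne: "(\<lambda>i. uu n a D i) ` {..<n} \<noteq> {}" using i by auto
  have c1: "c < 1" unfolding c_def using ne uD by (subst Max_less_iff) auto
  have cge: "uu n a D j \<le> c" if "j < n" for j unfolding c_def using that by (intro Max_ge) auto
  have c0: "0 \<le> c" using cge[OF i] u_nonneg[OF i, of D] by linarith
  have Dpos: "D > 0" unfolding D_def by simp
  have bound: "uu n a k i \<le> c ^ (k div D)" for k
  proof -
    have "(k div D) * D \<le> k" by simp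
    then have "uu n a k i \<le> uu n a ((k div D) * D) i" using u_antimono i by blast
    also have "\<dots> \<le> c ^ (k div D)" by (rule u_pow[OF cge c0 i])
    finally show ?thesis .
  qed
  have lim: "(\<lambda>k. c ^ (k div D)) \<longlonglongrightarrow> 0"
  proof -
    have "norm c < 1" using c0 c1 by simp
    from filterlim_compose[OF LIMSEQ_power_zero[OF this] filterlim_at_top_div_const_nat[OF Dpos]]
    show ?thesis by (simp add: o_def)
  qed
  show ?thesis
    by (rule tendsto_sandwich[OF _ _ tendsto_const lim]) (simp_all add: u_nonneg[OF i] bound)
qed


lemma single_cmp:
  assumes step: "\<And>t i. i < n \<Longrightarrow> p (Suc t) i \<le> (\<Sum>j<n. a i j * p t j)"
    and init: "\<And>j. j < n \<Longrightarrow> p 0 j \<le> C"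
  shows "i < n \<Longrightarrow> p t i \<le> C * uu n a t i"
proof (induction t arbitrary: i)
  case 0 then show ?case using init by simp
next
  case (Suc t)
  have "p (Suc t) i \<le> (\<Sum>j<n. a i j * p t j)" by (rule step[OF Suc.prems])
  also have "\<dots> \<le> (\<Sum>j<n. a i j * (C * uu n a t j))"
    by (intro sum_mono mult_left_mono Suc.IH nn Suc.prems) auto
  also have "\<dots> = C * uu n a (Suc t) i" by (simp add: sum_distrib_left algebra_simps)
  finally show ?case .
qed

end

locale core2 =
  fixes n :: nat and a1 a2 :: "nat \<Rightarrow> nat \<Rightarrow> real"
  assumes nn1: "\<And>i j. i < n \<Longrightarrow> j < n \<Longrightarrow> 0 \<le> a1 i j"
    and nn2: "\<And>i j. i < n \<Longrightarrow> j < n \<Longrightarrow> 0 \<le> a2 i j"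
    and rs2: "\<And>i. i < n \<Longrightarrow> (\<Sum>j<n. a1 i j + a2 i j) \<le> 1"
begin

sublocale core n "\<lambda>i j. a1 i j + a2 i j"
proof
  fix i j assume "i < n" "j < n"
  then show "0 \<le> a1 i j + a2 i j" using nn1 nn2 by (simp add: add_nonneg_nonneg)
next
  fix i assume "i < n"
  then show "(\<Sum>j<n. a1 i j + a2 i j) \<le> 1" by (rule rs2)
qed

lemma pair_cmp:
  assumes step: "\<And>t i. i < n \<Longrightarrow> p (Suc (Suc t)) i \<le> (\<Sum>j<n. a1 i j * p (Suc t) j) + (\<Sum>j<n. a2 i j * p t j)"
    and init0: "\<And>j. j < n \<Longrightarrow> p 0 j \<le> C"
    and init1: "\<And>j. j < n \<Longrightarrow> p 1 j \<le> C"
    and C: "0 \<le> C"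
  shows "i < n \<Longrightarrow> p t i \<le> C * uu n (\<lambda>i j. a1 i j + a2 i j) (t div 2) i"
proof -
  let ?u = "uu n (\<lambda>i j. a1 i j + a2 i j)"
  have main: "\<forall>i<n. p (2*m) i \<le> C * ?u m i \<and> p (Suc (2*m)) i \<le> C * ?u m i" for m
  proof (induction m)
    case 0 then show ?case using init0 init1 by simp
  next
    case (Suc m)
    have A: "p (2 * Suc m) i \<le> C * ?u (Suc m) i" if i: "i < n" for i
    proof -
      have "p (2 * Suc m) i = p (Suc (Suc (2*m))) i" by simp
      also have "\<dots> \<le> (\<Sum>j<n. a1 i j * p (Suc (2*m)) j) + (\<Sum>j<n. a2 i j * p (2*m) j)"
        by (rule step[OF i])
      also have "\<dots> \<le> (\<Sum>j<n. a1 i j * (C * ?u m j)) + (\<Sum>j<n. a2 i j * (C * ?u m j))"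
        using Suc.IH i by (intro add_mono sum_mono mult_left_mono nn1 nn2) auto
      also have "\<dots> = C * ?u (Suc m) i"
        unfolding uu.simps sum_distrib_left sum.distrib[symmetric]
        by (rule sum.cong) (auto simp: algebra_simps)
      finally show ?thesis .
    qed
    have B: "p (Suc (2 * Suc m)) i \<le> C * ?u (Suc m) i" if i: "i < n" for i
    proof -
      have le: "p (2 * Suc m) j \<le> C * ?u m j" if "j < n" for j
        using A[OF that] mult_left_mono[OF u_dec[OF that, of m] C] by linarith
      have "p (Suc (2 * Suc m)) i = p (Suc (Suc (Suc (2*m)))) i" by simp
      also have "\<dots> \<le> (\<Sum>j<n. a1 i j * p (Suc (Suc (2*m))) j) + (\<Sum>j<n. a2 i j * p (Suc (2*m)) j)"
        by (rule step[OF i])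
      also have "\<dots> \<le> (\<Sum>j<n. a1 i j * (C * ?u m j)) + (\<Sum>j<n. a2 i j * (C * ?u m j))"
        using Suc.IH le i by (intro add_mono sum_mono mult_left_mono nn1 nn2) auto
      also have "\<dots> = C * ?u (Suc m) i"
        unfolding uu.simps sum_distrib_left sum.distrib[symmetric]
        by (rule sum.cong) (auto simp: algebra_simps)
      finally show ?thesis .
    qed
    show ?case using A B by blast
  qed
  assume i: "i < n"
  show "p t i \<le> C * ?u (t div 2) i"
  proof -
    have "t = 2*(t div 2) \<or> t = Suc (2*(t div 2))" by presburger
    then show ?thesis using main[of "t div 2"] i by (metis)
  qed
qed

lemma pair_decay:
  assumes ex: "\<forall>i<n. \<exists>d. uu n (\<lambda>i j. a1 i j + a2 i j) d i < 1"
    and step: "\<And>t i. i < n \<Longrightarrow> p (Suc (Suc t)) i \<le> (\<Sum>j<n. a1 i j * p (Suc t) j) + (\<Sum>j<n. a2 i j * p t j)"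
    and init0: "\<And>j. j < n \<Longrightarrow> p 0 j \<le> C"
    and init1: "\<And>j. j < n \<Longrightarrow> p 1 j \<le> C"
    and C: "0 \<le> C"
    and pnn: "\<And>t i. i < n \<Longrightarrow> 0 \<le> p t i"
    and i: "i < n"
  shows "(\<lambda>t. p t i) \<longlonglongrightarrow> 0"
proof -
  have "(\<lambda>k. uu n (\<lambda>i j. a1 i j + a2 i j) k i) \<longlonglongrightarrow> 0" by (rule u_decay[OF ex i])
  from filterlim_compose[OF this filterlim_at_top_div_const_nat[of 2]]
  have "(\<lambda>t. uu n (\<lambda>i j. a1 i j + a2 i j) (t div 2) i) \<longlonglongrightarrow> 0" by (simp add: o_def)
  then have lim: "(\<lambda>t. C * uu n (\<lambda>i j. a1 i j + a2 i j) (t div 2) i) \<longlonglongrightarrow> 0"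
    using tendsto_mult_right_zero by blast
  show ?thesis
    by (rule tendsto_sandwich[OF _ _ tendsto_const lim])
      (simp_all add: pnn[OF i] pair_cmp[OF step init0 init1 C i])
qed

end

lemma (in core) single_decay:
  assumes ex: "\<forall>i<n. \<exists>d. uu n a d i < 1"
    and step: "\<And>t i. i < n \<Longrightarrow> p (Suc t) i \<le> (\<Sum>j<n. a i j * p t j)"
    and init: "\<And>j. j < n \<Longrightarrow> p 0 j \<le> C"
    and pnn: "\<And>t i. i < n \<Longrightarrow> 0 \<le> p t i"
    and i: "i < n"
  shows "(\<lambda>t. p t i) \<longlonglongrightarrow> 0"
proof -
  have "(\<lambda>k. uu n a k i) \<longlonglongrightarrow> 0" by (rule u_decay[OF ex i])
  then have lim: "(\<lambda>t. C * uu n a t i) \<longlonglongrightarrow> 0"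
    using tendsto_mult_right_zero by blast
  show ?thesis
    by (rule tendsto_sandwich[OF _ _ tendsto_const lim])
      (simp_all add: pnn[OF i] single_cmp[OF step init i])
qed




lemma mv_comp:
  fixes M :: "'a :: comm_ring_1 mat"
  assumes "M \<in> carrier_mat n n" "y \<in> carrier_vec n" "i < n"
  shows "(M *\<^sub>v y) $ i = (\<Sum>j<n. M $$ (i,j) * y $ j)"
  using assms by (auto simp: scalar_prod_def lessThan_atLeast0 intro!: sum.cong)

lemma cmv_comp:
  fixes M :: "real mat"
  assumes "M \<in> carrier_mat n n" "y \<in> carrier_vec n" "i < n"
  shows "(map_mat complex_of_real M *\<^sub>v y) $ i = (\<Sum>j<n. complex_of_real (M $$ (i,j)) * y $ j)"
  using assms by (auto simp: scalar_prod_def lessThan_atLeast0 intro!: sum.cong)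

lemma diag_mv:
  fixes L :: "'a :: comm_ring_1 mat"
  assumes L: "L \<in> carrier_mat n n" and d: "diagonal_mat L" and y: "y \<in> carrier_vec n" and i: "i < n"
  shows "(L *\<^sub>v y) $ i = L $$ (i,i) * y $ i"
proof -
  have "(L *\<^sub>v y) $ i = (\<Sum>j<n. L $$ (i,j) * y $ j)" by (rule mv_comp[OF L y i])
  also have "\<dots> = (\<Sum>j<n. if j = i then L $$ (i,i) * y $ i else 0)"
    using d L i unfolding diagonal_mat_def by (intro sum.cong) auto
  also have "\<dots> = L $$ (i,i) * y $ i" using i by simp
  finally show ?thesis .
qed

lemma diag_mm:
  fixes L :: "'a :: comm_ring_1 mat"
  assumes L: "L \<in> carrier_mat n n" and d: "diagonal_mat L" and W: "W \<in> carrier_mat n n"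
    and i: "i < n" and j: "j < n"
  shows "(L * W) $$ (i,j) = L $$ (i,i) * W $$ (i,j)"
proof -
  have "(L * W) $$ (i,j) = (L *\<^sub>v col W j) $ i"
    using L W i j by simp
  also have "\<dots> = L $$ (i,i) * col W j $ i" using W j by (intro diag_mv[OF L d _ i]) auto
  finally show ?thesis using W i j by simp
qed

lemma norm_sum_le:
  fixes c :: "nat \<Rightarrow> real" and z :: "nat \<Rightarrow> complex"
  assumes "\<And>j. j < n \<Longrightarrow> 0 \<le> c j"
  shows "norm (\<Sum>j<n. complex_of_real (c j) * z j) \<le> (\<Sum>j<n. c j * norm (z j))"
proof -
  have "norm (\<Sum>j<n. complex_of_real (c j) * z j) \<le> (\<Sum>j<n. norm (complex_of_real (c j) * z j))"
    by (rule norm_sum)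
  also have "\<dots> = (\<Sum>j<n. c j * norm (z j))"
    using assms by (intro sum.cong) (auto simp: norm_mult)
  finally show ?thesis .
qed

lemma abs_sum_le:
  fixes c :: "nat \<Rightarrow> real" and z :: "nat \<Rightarrow> real"
  assumes "\<And>j. j < n \<Longrightarrow> 0 \<le> c j"
  shows "\<bar>\<Sum>j<n. c j * z j\<bar> \<le> (\<Sum>j<n. c j * \<bar>z j\<bar>)"
proof -
  have "\<bar>\<Sum>j<n. c j * z j\<bar> \<le> (\<Sum>j<n. \<bar>c j * z j\<bar>)"
    by (rule sum_abs)
  also have "\<dots> = (\<Sum>j<n. c j * \<bar>z j\<bar>)"
    using assms by (intro sum.cong) (auto simp: abs_mult)
  finally show ?thesis .
qed




lemma rho_nonneg: assumes "M \<in> carrier_mat m m" "m > 0" shows "0 \<le> rho M"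
proof -
  have "rho M \<in> norm ` spectrum (map_mat complex_of_real M)"
    unfolding rho_def by (rule spectral_radius_mem_max(1)) (use assms in auto)
  then show ?thesis by auto
qed

lemma pow_nonneg:
  fixes N :: "real mat"
  assumes N: "N \<in> carrier_mat m m" and nn: "\<forall>i<m. \<forall>j<m. 0 \<le> N $$ (i,j)"
  shows "\<forall>i<m. \<forall>j<m. 0 \<le> (N ^\<^sub>m k) $$ (i,j)"
proof (induction k)
  case 0 then show ?case using N by simp
next
  case (Suc k)
  show ?case
  proof (intro allI impI)
    fix i j assume i: "i < m" and j: "j < m"
    have "(N ^\<^sub>m Suc k) $$ (i,j) = ((N ^\<^sub>m k) * N) $$ (i,j)" by simp
    also have "\<dots> = (\<Sum>l<m. (N ^\<^sub>m k) $$ (i,l) * N $$ (l,j))"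
      using N i j by (auto simp: scalar_prod_def lessThan_atLeast0 intro!: sum.cong)
    also have "\<dots> \<ge> 0" using Suc nn i j by (intro sum_nonneg mult_nonneg_nonneg) auto
    finally show "0 \<le> (N ^\<^sub>m Suc k) $$ (i,j)" .
  qed
qed

lemma rho_ge1:
  fixes M :: "real mat"
  assumes M: "M \<in> carrier_mat m m" and m: "m > 0"
    and nn: "\<forall>i<m. \<forall>j<m. 0 \<le> M $$ (i,j)"
    and v: "v \<in> carrier_vec m" and vnn: "\<forall>i<m. 0 \<le> v $ i"
    and i0: "i0 < m" and vi0: "v $ i0 > 0"
    and sup: "\<forall>i<m. v $ i \<le> (M *\<^sub>v v) $ i"
  shows "1 \<le> rho M"
proof (rule ccontr)
  assume "\<not> 1 \<le> rho M"
  then have r1: "rho M < 1" by simp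
  define r where "r = rho M"
  have r0: "0 \<le> r" unfolding r_def by (rule rho_nonneg[OF M m])
  define c where "c = 2 / (1 + r)"
  have c1: "1 < c" using r0 r1 unfolding c_def r_def by (simp add: field_simps)
  have cr: "c * r < 1" using r0 r1 unfolding c_def r_def by (simp add: field_simps)
  define N where "N = c \<cdot>\<^sub>m M"
  have N: "N \<in> carrier_mat m m" using M unfolding N_def by simp
  define Mc where "Mc = map_mat complex_of_real M"
  define Nc where "Nc = map_mat complex_of_real N"
  have Mc: "Mc \<in> carrier_mat m m" using M unfolding Mc_def by simp
  have Nc: "Nc \<in> carrier_mat m m" using N unfolding Nc_def by simp
  have srN: "spectral_radius Nc < 1"
  proof -
    from spectral_radius_mem_max(1)[OF Nc m] obtain mu where
      mu: "mu \<in> spectrum Nc" and eq: "spectral_radius Nc = norm mu" by auto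
    from mu obtain w where ev: "eigenvector Nc w mu"
      unfolding spectrum_def eigenvalue_def by auto
    then have w: "w \<in> carrier_vec m" and w0: "w \<noteq> 0\<^sub>v m" and Nw: "Nc *\<^sub>v w = mu \<cdot>\<^sub>v w"
      unfolding eigenvector_def using Nc by auto
    have "Mc *\<^sub>v w = (mu / complex_of_real c) \<cdot>\<^sub>v w"
    proof (rule eq_vecI)
      fix i assume "i < dim_vec ((mu / complex_of_real c) \<cdot>\<^sub>v w)"
      then have i: "i < m" using w by simp
      have "(Nc *\<^sub>v w) $ i = complex_of_real c * (Mc *\<^sub>v w) $ i"
        unfolding Nc_def Mc_def N_def
        using cmv_comp[OF M w i] cmv_comp[OF N[unfolded N_def] w i] M i
        by (simp add: sum_distrib_left mult.assoc)
      then have "mu * w $ i = complex_of_real c * (Mc *\<^sub>v w) $ i" using Nw i w by simp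
      then show "(Mc *\<^sub>v w) $ i = ((mu / complex_of_real c) \<cdot>\<^sub>v w) $ i"
        using c1 i w by (simp add: field_simps)
    qed (use w Mc in auto)
    then have "eigenvector Mc w (mu / complex_of_real c)"
      unfolding eigenvector_def using w w0 Mc by auto
    then have "mu / complex_of_real c \<in> spectrum Mc" unfolding spectrum_def eigenvalue_def by auto
    then have "norm (mu / complex_of_real c) \<le> r"
      unfolding r_def rho_def Mc_def by (intro spectral_radius_mem_max(2)[OF _ m]) (use M in auto)
    then have "norm mu / c \<le> r" using c1 by (simp add: norm_divide)
    then have "norm mu \<le> c * r" using c1 by (simp add: field_simps)
    then show ?thesis using eq cr by simp
  qed
  from char_poly_factorized[OF Nc] obtain as where "char_poly Nc = (\<Prod>a\<leftarrow>as. [:- a, 1:])" by auto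
  from jordan_nf_exists[OF Nc this] have jnf: "\<exists>n_as. jordan_nf Nc n_as" .
  from spectral_radius_jnf_norm_bound_less_1[OF Nc srN jnf] obtain B where
    B: "\<And>k. norm_bound (Nc ^\<^sub>m k) B" by auto
  have Nnn: "\<forall>i<m. \<forall>j<m. 0 \<le> N $$ (i,j)" using nn M c1 unfolding N_def by auto
  have grow: "\<forall>i<m. c ^ k * v $ i \<le> (N ^\<^sub>m k *\<^sub>v v) $ i" for k
  proof (induction k)
    case 0 then show ?case using v N by simp
  next
    case (Suc k)
    show ?case
    proof (intro allI impI)
      fix i assume i: "i < m"
      let ?P = "N ^\<^sub>m k"
      have P: "?P \<in> carrier_mat m m" using N by simp
      have Pnn: "\<forall>i<m. \<forall>j<m. 0 \<le> ?P $$ (i,j)" by (rule pow_nonneg[OF N Nnn])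
      have Nv: "N *\<^sub>v v \<in> carrier_vec m" using N v by simp
      have Nvj: "c * v $ j \<le> (N *\<^sub>v v) $ j" if j: "j < m" for j
      proof -
        have "(N *\<^sub>v v) $ j = c * (M *\<^sub>v v) $ j"
          unfolding N_def using mv_comp[OF M v j] mv_comp[OF N[unfolded N_def] v j] M j
          by (simp add: sum_distrib_left mult.assoc)
        then show ?thesis using sup j c1 by simp
      qed
      have "(N ^\<^sub>m Suc k *\<^sub>v v) $ i = (?P *\<^sub>v (N *\<^sub>v v)) $ i"
        using assoc_mult_mat_vec[OF P N v] by simp
      also have "\<dots> = (\<Sum>j<m. ?P $$ (i,j) * (N *\<^sub>v v) $ j)" by (rule mv_comp[OF P Nv i])
      also have "\<dots> \<ge> (\<Sum>j<m. ?P $$ (i,j) * (c * v $ j))"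
        using Pnn i Nvj by (intro sum_mono mult_left_mono) auto
      finally have "(\<Sum>j<m. ?P $$ (i,j) * (c * v $ j)) \<le> (N ^\<^sub>m Suc k *\<^sub>v v) $ i" .
      moreover have "(\<Sum>j<m. ?P $$ (i,j) * (c * v $ j)) = c * (?P *\<^sub>v v) $ i"
        using mv_comp[OF P v i] by (simp add: sum_distrib_left algebra_simps)
      moreover have "c * (c ^ k * v $ i) \<le> c * (?P *\<^sub>v v) $ i"
        using Suc i c1 by (intro mult_left_mono) auto
      ultimately show "c ^ Suc k * v $ i \<le> (N ^\<^sub>m Suc k *\<^sub>v v) $ i" by (simp add: mult.assoc)
    qed
  qed
  define S where "S = (\<Sum>j<m. v $ j)"
  have bnd: "c ^ k * v $ i0 \<le> B * S" for k
  proof -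
    let ?P = "N ^\<^sub>m k"
    have P: "?P \<in> carrier_mat m m" using N by simp
    have ent: "?P $$ (i0,j) \<le> B" if j: "j < m" for j
    proof -
      have "Nc ^\<^sub>m k = map_mat complex_of_real ?P"
        unfolding Nc_def by (rule of_real_hom.mat_hom_pow[symmetric, OF N])
      then have "(Nc ^\<^sub>m k) $$ (i0,j) = complex_of_real (?P $$ (i0,j))" using carrier_matD[OF P] i0 j by simp
      moreover have "norm ((Nc ^\<^sub>m k) $$ (i0,j)) \<le> B"
        using B[of k] Nc i0 j unfolding norm_bound_def by auto
      ultimately show ?thesis by simp
    qed
    have "c ^ k * v $ i0 \<le> (?P *\<^sub>v v) $ i0" using grow i0 by auto
    also have "\<dots> = (\<Sum>j<m. ?P $$ (i0,j) * v $ j)" by (rule mv_comp[OF P v i0])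
    also have "\<dots> \<le> (\<Sum>j<m. B * v $ j)" using ent vnn by (intro sum_mono mult_right_mono) auto
    also have "\<dots> = B * S" unfolding S_def by (simp add: sum_distrib_left)
    finally show ?thesis .
  qed
  from real_arch_pow[OF c1, of "B * S / v $ i0"] obtain k where "B * S / v $ i0 < c ^ k" by auto
  then have "B * S < c ^ k * v $ i0" using vi0 by (simp add: field_simps)
  with bnd[of k] show False by simp
qed




locale fj =
  fixes n :: nat and L W1 W2 :: "real mat"
  assumes n_pos: "n > 0"
    and L: "L \<in> carrier_mat n n" and W1: "W1 \<in> carrier_mat n n" and W2: "W2 \<in> carrier_mat n n"
    and L_diag: "diagonal_mat L"
    and L_range: "\<forall>i<n. 0 \<le> L $$ (i,i) \<and> L $$ (i,i) \<le> 1"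
    and W1_nonneg: "nonneg_mat W1" and W2_nonneg: "nonneg_mat W2"
    and W_stoch: "row_stochastic n (W1 + W2)"
begin

abbreviation "a1 \<equiv> \<lambda>i j. L $$ (i,i) * W1 $$ (i,j)"
abbreviation "a2 \<equiv> \<lambda>i j. L $$ (i,i) * W2 $$ (i,j)"
abbreviation "aa \<equiv> \<lambda>i j. L $$ (i,i) * W1 $$ (i,j) + L $$ (i,i) * W2 $$ (i,j)"
abbreviation "V \<equiv> {i. i < n \<and> L $$ (i,i) < 1}"
abbreviation "E \<equiv> graph_edges n (W1 + W2)"

lemma W1nn: "i < n \<Longrightarrow> j < n \<Longrightarrow> 0 \<le> W1 $$ (i,j)"
  using W1_nonneg W1 unfolding nonneg_mat_def by auto
lemma W2nn: "i < n \<Longrightarrow> j < n \<Longrightarrow> 0 \<le> W2 $$ (i,j)"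
  using W2_nonneg W2 unfolding nonneg_mat_def by auto
lemma Wsum: "i < n \<Longrightarrow> (\<Sum>j<n. W1 $$ (i,j) + W2 $$ (i,j)) = 1"
  using W_stoch W1 W2 unfolding row_stochastic_def by auto
lemma l0: "i < n \<Longrightarrow> 0 \<le> L $$ (i,i)" using L_range by auto
lemma l1: "i < n \<Longrightarrow> L $$ (i,i) \<le> 1" using L_range by auto

lemma aa_sum: "i < n \<Longrightarrow> (\<Sum>j<n. aa i j * y j) = L $$ (i,i) * (\<Sum>j<n. (W1 $$ (i,j) + W2 $$ (i,j)) * y j)"
  by (simp add: sum_distrib_left algebra_simps)

sublocale core2 n a1 a2
proof
  fix i j assume "i < n" "j < n"
  then show "0 \<le> a1 i j" "0 \<le> a2 i j" using l0 W1nn W2nn by auto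
next
  fix i assume i: "i < n"
  have "(\<Sum>j<n. a1 i j + a2 i j) = L $$ (i,i) * (\<Sum>j<n. W1 $$ (i,j) + W2 $$ (i,j))"
    by (simp add: sum_distrib_left algebra_simps)
  also have "\<dots> = L $$ (i,i)" using Wsum[OF i] by simp
  finally show "(\<Sum>j<n. a1 i j + a2 i j) \<le> 1" using l1[OF i] by simp
qed

lemma u_le1: "i < n \<Longrightarrow> uu n aa d i \<le> 1"
  using u_antimono[of 0 d i] by simp

lemma reach:
  assumes "(i,j) \<in> E\<^sup>*" and "j \<in> V"
  shows "i < n \<longrightarrow> (\<exists>d. uu n aa d i < 1)"
  using assms(1)
proof (induction rule: converse_rtrancl_induct)
  case base
  show ?case
  proof
    assume j: "j < n"
    have "uu n aa 1 j = (\<Sum>k<n. aa j k)" by (simp add: numeral_eq_Suc)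
    also have "\<dots> = L $$ (j,j) * (\<Sum>k<n. W1 $$ (j,k) + W2 $$ (j,k))"
      by (simp add: sum_distrib_left algebra_simps)
    also have "\<dots> = L $$ (j,j)" using Wsum[OF j] by simp
    finally have "uu n aa 1 j = L $$ (j,j)" .
    moreover have "L $$ (j,j) < 1" using assms(2) by simp
    ultimately have "uu n aa 1 j < 1" by linarith
    then show "\<exists>d. uu n aa d j < 1" by blast
  qed
next
  case (step y z)
  from step.hyps(1) have y: "y < n" and z: "z < n" and w: "(W1 + W2) $$ (y,z) > 0"
    unfolding graph_edges_def by auto
  from w have wyz: "W1 $$ (y,z) + W2 $$ (y,z) > 0" using W1 W2 y z by simp
  from step.IH z obtain d where d: "uu n aa d z < 1" by auto
  let ?w = "\<lambda>k. W1 $$ (y,k) + W2 $$ (y,k)"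
  have S: "(\<Sum>k<n. ?w k * uu n aa d k) < (\<Sum>k<n. ?w k)"
  proof (rule sum_strict_mono_ex1)
    show "\<forall>k\<in>{..<n}. ?w k * uu n aa d k \<le> ?w k"
      using W1nn W2nn y u_le1 by (auto intro!: mult_left_le add_nonneg_nonneg)
    show "\<exists>k\<in>{..<n}. ?w k * uu n aa d k < ?w k"
      using z wyz d by (intro bexI[of _ z]) auto
  qed simp
  have S0: "0 \<le> (\<Sum>k<n. ?w k * uu n aa d k)"
    using W1nn W2nn y u_nonneg by (auto intro!: sum_nonneg mult_nonneg_nonneg add_nonneg_nonneg)
  have "uu n aa (Suc d) y = L $$ (y,y) * (\<Sum>k<n. ?w k * uu n aa d k)"
    using aa_sum[OF y] by simp
  also have "\<dots> \<le> (\<Sum>k<n. ?w k * uu n aa d k)"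
    using l1[OF y] S0 by (simp add: mult_left_le_one_le l0[OF y])
  also have "\<dots> < 1" using S Wsum[OF y] by simp
  finally show ?case by blast
qed

definition c3 where "c3 \<longleftrightarrow> V \<noteq> {} \<and> globally_reachable n (W1 + W2) V"

lemma EX: assumes "c3" shows "\<forall>i<n. \<exists>d. uu n aa d i < 1"
proof (intro allI impI)
  fix i assume i: "i < n"
  from assms i obtain j where "j \<in> V" "(i,j) \<in> E\<^sup>*"
    unfolding c3_def globally_reachable_def by blast
  then show "\<exists>d. uu n aa d i < 1" using reach i by blast
qed

lemma NEG: assumes "\<not> c3"
  shows "\<exists>v. v \<in> carrier_vec n \<and> (\<forall>i<n. 0 \<le> v $ i) \<and> (\<exists>i<n. 0 < v $ i)
           \<and> (\<forall>i<n. v $ i \<le> (\<Sum>j<n. aa i j * v $ j))"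
proof -
  obtain i0 where i0: "i0 < n" and nr: "\<forall>j\<in>V. (i0,j) \<notin> E\<^sup>*"
  proof (cases "V = {}")
    case True then show ?thesis using that n_pos by blast
  next
    case False
    with assms have "\<not> globally_reachable n (W1 + W2) V" unfolding c3_def by blast
    then show ?thesis using that unfolding globally_reachable_def by blast
  qed
  define v where "v = vec n (\<lambda>k. if (i0,k) \<in> E\<^sup>* then 1 else (0::real))"
  have v: "v \<in> carrier_vec n" unfolding v_def by simp
  have vi0: "0 < v $ i0" unfolding v_def using i0 by simp
  have vnn: "\<forall>i<n. 0 \<le> v $ i" unfolding v_def by simp
  have sup: "v $ i \<le> (\<Sum>j<n. aa i j * v $ j)" if i: "i < n" for i
  proof (cases "(i0,i) \<in> E\<^sup>*")
    case True
    then have "i \<notin> V" using nr by blast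
    then have li: "L $$ (i,i) = 1" using i l1[OF i] by auto
    have "(\<Sum>j<n. aa i j * v $ j) = L $$ (i,i) * (\<Sum>j<n. (W1 $$ (i,j) + W2 $$ (i,j)) * v $ j)"
      by (rule aa_sum[OF i])
    also have "(\<Sum>j<n. (W1 $$ (i,j) + W2 $$ (i,j)) * v $ j) = (\<Sum>j<n. W1 $$ (i,j) + W2 $$ (i,j))"
    proof (rule sum.cong)
      fix j assume "j \<in> {..<n}"
      then have j: "j < n" by simp
      show "(W1 $$ (i,j) + W2 $$ (i,j)) * v $ j = W1 $$ (i,j) + W2 $$ (i,j)"
      proof (cases "W1 $$ (i,j) + W2 $$ (i,j) > 0")
        case True
        then have "(i,j) \<in> E" unfolding graph_edges_def using i j W1 W2 by simp
        then have "(i0,j) \<in> E\<^sup>*" using \<open>(i0,i) \<in> E\<^sup>*\<close> by (rule rtrancl_into_rtrancl[rotated])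
        then show ?thesis unfolding v_def using j by simp
      next
        case False
        then have "W1 $$ (i,j) + W2 $$ (i,j) = 0" using W1nn[OF i j] W2nn[OF i j] by simp
        then show ?thesis by simp
      qed
    qed simp
    finally show ?thesis using Wsum[OF i] li unfolding v_def using i True by simp
  next
    case False
    then have "v $ i = 0" unfolding v_def using i by simp
    moreover have "0 \<le> (\<Sum>j<n. aa i j * v $ j)"
      using vnn l0 W1nn W2nn i by (auto intro!: sum_nonneg mult_nonneg_nonneg add_nonneg_nonneg)
    ultimately show ?thesis by simp
  qed
  show ?thesis using v vnn vi0 i0 sup by blast
qed

end



lemma pow_lim_lt1:
  fixes x y :: real
  assumes lim: "(\<lambda>t. x ^ t * y) \<longlonglongrightarrow> 0" and y: "0 < y" and x: "0 \<le> x"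
  shows "x < 1"
proof (rule ccontr)
  assume "\<not> x < 1"
  then have x1: "1 \<le> x" by simp
  have "\<forall>t\<ge>0. y \<le> x ^ t * y" using x1 y by (simp add: one_le_power)
  then have "y \<le> 0" by (intro LIMSEQ_le_const[OF lim]) blast
  with y show False by simp
qed

lemma vec_nz: assumes "w \<in> carrier_vec n" "w \<noteq> 0\<^sub>v n" shows "\<exists>i<n. w $ i \<noteq> 0"
proof (rule ccontr)
  assume "\<not> (\<exists>i<n. w $ i \<noteq> 0)"
  then have "w = 0\<^sub>v n" using assms(1) by (intro eq_vecI) auto
  with assms(2) show False by simp
qed

context fj begin

abbreviation "A \<equiv> Abar L W1 W2"
abbreviation "Ad \<equiv> Abar_d n L W1 W2"

lemma A_car: "A \<in> carrier_mat n n" unfolding Abar_def using L W1 W2 by simp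

lemma A_entry: "i < n \<Longrightarrow> j < n \<Longrightarrow> A $$ (i,j) = aa i j"
  unfolding Abar_def using diag_mm[OF L L_diag _ , of "W1 + W2" i j] W1 W2
  by (simp add: algebra_simps)

lemma A_comp: "y \<in> carrier_vec n \<Longrightarrow> i < n \<Longrightarrow> (A *\<^sub>v y) $ i = (\<Sum>j<n. aa i j * y $ j)"
  using mv_comp[OF A_car] A_entry by simp

lemma A_ccomp: "y \<in> carrier_vec n \<Longrightarrow> i < n \<Longrightarrow>
  (map_mat complex_of_real A *\<^sub>v y) $ i = (\<Sum>j<n. complex_of_real (aa i j) * y $ j)"
  using cmv_comp[OF A_car] A_entry by simp

lemma LW2_entry: "i < n \<Longrightarrow> j < n \<Longrightarrow> (L * W2) $$ (i,j) = a2 i j"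
  using diag_mm[OF L L_diag W2] by simp
lemma LW1_entry: "i < n \<Longrightarrow> j < n \<Longrightarrow> (L * W1) $$ (i,j) = a1 i j"
  using diag_mm[OF L L_diag W1] by simp

lemma LW_comp: "y \<in> carrier_vec n \<Longrightarrow> z \<in> carrier_vec n \<Longrightarrow> i < n \<Longrightarrow>
  (L *\<^sub>v (W1 *\<^sub>v y + W2 *\<^sub>v z)) $ i = (\<Sum>j<n. a1 i j * y $ j) + (\<Sum>j<n. a2 i j * z $ j)"
  using diag_mv[OF L L_diag, of "W1 *\<^sub>v y + W2 *\<^sub>v z" i] mv_comp[OF W1, of y i] mv_comp[OF W2, of z i] W1 W2
  by (simp add: sum_distrib_left algebra_simps)

lemma Ad_car: "Ad \<in> carrier_mat (n+n) (n+n)"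
  unfolding Abar_d_def using L W1 W2 by (intro four_block_carrier_mat) auto

lemma Ad_nn: "\<forall>i<n+n. \<forall>j<n+n. 0 \<le> Ad $$ (i,j)"
proof (intro allI impI)
  fix i j assume i: "i < n+n" and j: "j < n+n"
  show "0 \<le> Ad $$ (i,j)"
  proof -
    have "Ad $$ (i,j) = (if i < n then if j < n then 0 else (1\<^sub>m n) $$ (i, j - n)
        else if j < n then (L * W2) $$ (i - n, j) else (L * W1) $$ (i - n, j - n))"
      unfolding Abar_d_def using i j L W1 W2 by simp
    then show ?thesis using i j LW2_entry LW1_entry l0 W1nn W2nn by auto
  qed
qed

lemma Ad_mult: "a \<in> carrier_vec n \<Longrightarrow> b \<in> carrier_vec n \<Longrightarrow>
  Ad *\<^sub>v (a @\<^sub>v b) = b @\<^sub>v ((L * W2) *\<^sub>v a + (L * W1) *\<^sub>v b)"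
  unfolding Abar_d_def using L W1 W2
  by (subst four_block_mat_mult_vec[of _ n n _ n _ n]) auto

lemma Adc_eq: "map_mat complex_of_real Ad = four_block_mat (0\<^sub>m n n) (1\<^sub>m n)
    (map_mat complex_of_real (L * W2)) (map_mat complex_of_real (L * W1))"
  unfolding Abar_d_def using L W1 W2
  by (subst map_four_block_mat[of _ n n _ n _ n]) (auto intro!: eq_matI)

lemma Adc_mult: "a \<in> carrier_vec n \<Longrightarrow> b \<in> carrier_vec n \<Longrightarrow>
  map_mat complex_of_real Ad *\<^sub>v (a @\<^sub>v b) = b @\<^sub>v (map_mat complex_of_real (L * W2) *\<^sub>v a + map_mat complex_of_real (L * W1) *\<^sub>v b)"
  unfolding Adc_eq using L W1 W2
  by (subst four_block_mat_mult_vec[of _ n n _ n _ n]) auto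

lemma rhoA_ge: assumes "\<not> c3" shows "1 \<le> rho A"
proof -
  from NEG[OF assms] obtain v i0 where v: "v \<in> carrier_vec n" and vnn: "\<forall>i<n. 0 \<le> v $ i"
    and i0: "i0 < n" "0 < v $ i0" and sup: "\<forall>i<n. v $ i \<le> (\<Sum>j<n. aa i j * v $ j)" by blast
  show ?thesis
  proof (rule rho_ge1[OF A_car n_pos _ v vnn i0])
    show "\<forall>i<n. \<forall>j<n. 0 \<le> A $$ (i, j)" using A_entry l0 W1nn W2nn by auto
    show "\<forall>i<n. v $ i \<le> (A *\<^sub>v v) $ i"
    proof (intro allI impI)
      fix i assume i: "i < n"
      show "v $ i \<le> (A *\<^sub>v v) $ i" by (subst A_comp[OF v i]) (use sup i in blast)
    qed
  qed
qed

lemma rhoAd_ge: assumes "\<not> c3" shows "1 \<le> rho Ad"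
proof -
  from NEG[OF assms] obtain v i0 where v: "v \<in> carrier_vec n" and vnn: "\<forall>i<n. 0 \<le> v $ i"
    and i0: "i0 < n" "0 < v $ i0" and sup: "\<forall>i<n. v $ i \<le> (\<Sum>j<n. aa i j * v $ j)" by blast
  let ?vv = "v @\<^sub>v v"
  have vv: "?vv \<in> carrier_vec (n+n)" using v by simp
  have vvi: "?vv $ i = (if i < n then v $ i else v $ (i - n))" if "i < n+n" for i
    using that v by (subst index_append_vec) auto
  have vvnn: "\<forall>i<n+n. 0 \<le> ?vv $ i"
  proof (intro allI impI)
    fix i assume i: "i < n+n"
    show "0 \<le> ?vv $ i" unfolding vvi[OF i] using vnn i by simp
  qed
  have i0': "i0 < n+n" "0 < ?vv $ i0" using i0 vvi[of i0] by auto
  show ?thesis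
  proof (rule rho_ge1[OF Ad_car _ Ad_nn vv vvnn i0'])
    show "0 < n + n" using n_pos by simp
    show "\<forall>i<n+n. ?vv $ i \<le> (Ad *\<^sub>v ?vv) $ i"
    proof (intro allI impI)
      fix i assume i: "i < n+n"
      have eq: "Ad *\<^sub>v ?vv = v @\<^sub>v ((L * W2) *\<^sub>v v + (L * W1) *\<^sub>v v)" by (rule Ad_mult[OF v v])
      show "?vv $ i \<le> (Ad *\<^sub>v ?vv) $ i"
      proof (cases "i < n")
        case True
        have "(v @\<^sub>v ((L * W2) *\<^sub>v v + (L * W1) *\<^sub>v v)) $ i = v $ i"
          using v True L W1 W2 by (subst index_append_vec) auto
        then show ?thesis unfolding eq vvi[OF i] using True by simp
      next
        case False
        then have k: "i - n < n" using i by simp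
        have "((L * W2) *\<^sub>v v + (L * W1) *\<^sub>v v) $ (i - n) = (\<Sum>j<n. a2 (i-n) j * v $ j) + (\<Sum>j<n. a1 (i-n) j * v $ j)"
          using mv_comp[of "L * W2" n v "i - n"] mv_comp[of "L * W1" n v "i - n"] L W1 W2 v k
            LW2_entry[OF k] LW1_entry[OF k] by simp
        also have "\<dots> = (\<Sum>j<n. aa (i-n) j * v $ j)"
          unfolding sum.distrib[symmetric] by (rule sum.cong) (auto simp: algebra_simps)
        finally have X: "((L * W2) *\<^sub>v v + (L * W1) *\<^sub>v v) $ (i - n) = (\<Sum>j<n. aa (i-n) j * v $ j)" .
        have "(v @\<^sub>v ((L * W2) *\<^sub>v v + (L * W1) *\<^sub>v v)) $ i = ((L * W2) *\<^sub>v v + (L * W1) *\<^sub>v v) $ (i - n)"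
          using v False i L W1 W2 by (subst index_append_vec) auto
        then show ?thesis unfolding eq vvi[OF i] using False X sup k by simp
      qed
    qed
  qed
qed

end


context fj begin

lemma rhoA_lt: assumes "c3" shows "rho A < 1"
proof -
  let ?Ac = "map_mat complex_of_real A"
  have Ac: "?Ac \<in> carrier_mat n n" using A_car by simp
  from spectral_radius_mem_max(1)[OF Ac n_pos] obtain mu where
    mu: "mu \<in> spectrum ?Ac" and eq: "spectral_radius ?Ac = norm mu" by auto
  from mu obtain w where "eigenvector ?Ac w mu" unfolding spectrum_def eigenvalue_def by auto
  then have w: "w \<in> carrier_vec n" and w0: "w \<noteq> 0\<^sub>v n" and Aw: "?Ac *\<^sub>v w = mu \<cdot>\<^sub>v w"
    unfolding eigenvector_def using Ac by auto
  from vec_nz[OF w w0] obtain i where i: "i < n" "w $ i \<noteq> 0" by auto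
  define p where "p = (\<lambda>t j. norm mu ^ t * norm (w $ j))"
  have step: "p (Suc t) j \<le> (\<Sum>k<n. aa j k * p t k)" if j: "j < n" for t j
  proof -
    have "mu * w $ j = (?Ac *\<^sub>v w) $ j" using Aw w j by simp
    also have "\<dots> = (\<Sum>k<n. complex_of_real (aa j k) * w $ k)" by (rule A_ccomp[OF w j])
    finally have "norm (mu * w $ j) = norm (\<Sum>k<n. complex_of_real (aa j k) * w $ k)" by simp
    also have "\<dots> \<le> (\<Sum>k<n. aa j k * norm (w $ k))"
      by (rule norm_sum_le) (use j l0 W1nn W2nn in auto)
    finally have le: "norm mu * norm (w $ j) \<le> (\<Sum>k<n. aa j k * norm (w $ k))" by (simp add: norm_mult)
    have "p (Suc t) j = norm mu ^ t * (norm mu * norm (w $ j))" unfolding p_def by simp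
    also have "\<dots> \<le> norm mu ^ t * (\<Sum>k<n. aa j k * norm (w $ k))"
      by (intro mult_left_mono le) auto
    also have "\<dots> = (\<Sum>k<n. aa j k * p t k)" unfolding p_def sum_distrib_left
      by (rule sum.cong) (auto simp: algebra_simps)
    finally show ?thesis .
  qed
  define C where "C = (\<Sum>k<n. norm (w $ k))"
  have init: "p 0 j \<le> C" if "j < n" for j
  proof -
    have "norm (w $ j) \<le> C" unfolding C_def using that by (intro member_le_sum) auto
    then show ?thesis unfolding p_def by simp
  qed
  have pnn: "0 \<le> p t j" for t j unfolding p_def by simp
  have "(\<lambda>t. p t i) \<longlonglongrightarrow> 0" by (rule single_decay[OF EX[OF assms] step init pnn i(1)])
  then have "norm mu < 1" unfolding p_def by (rule pow_lim_lt1) (use i in auto)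
  then show ?thesis unfolding rho_def eq .
qed

lemma rhoAd_lt: assumes "c3" shows "rho Ad < 1"
proof -
  let ?Ac = "map_mat complex_of_real Ad"
  have Ac: "?Ac \<in> carrier_mat (n+n) (n+n)" using Ad_car by simp
  have nn: "0 < n + n" using n_pos by simp
  from spectral_radius_mem_max(1)[OF Ac nn] obtain mu where
    mu: "mu \<in> spectrum ?Ac" and eq: "spectral_radius ?Ac = norm mu" by auto
  from mu obtain w where "eigenvector ?Ac w mu" unfolding spectrum_def eigenvalue_def by auto
  then have w: "w \<in> carrier_vec (n+n)" and w0: "w \<noteq> 0\<^sub>v (n+n)" and Aw: "?Ac *\<^sub>v w = mu \<cdot>\<^sub>v w"
    unfolding eigenvector_def using Ac by auto
  define a where "a = vec_first w n"
  define b where "b = vec_last w n"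
  have a: "a \<in> carrier_vec n" and b: "b \<in> carrier_vec n" unfolding a_def b_def by auto
  have wab: "a @\<^sub>v b = w" unfolding a_def b_def using w by simp
  have aj: "a $ j = w $ j" if "j < n" for j unfolding a_def using that by (simp add: vec_first_def)
  have bj: "b $ j = w $ (n + j)" if "j < n" for j unfolding b_def using that w by (simp add: vec_last_def)
  define X where "X = map_mat complex_of_real (L * W2) *\<^sub>v a + map_mat complex_of_real (L * W1) *\<^sub>v b"
  have X: "X \<in> carrier_vec n" unfolding X_def
    by (rule add_carrier_vec; rule mult_mat_vec_carrier[of _ n n]) (use L W1 W2 a b in auto)
  have eqv: "b @\<^sub>v X = mu \<cdot>\<^sub>v w" using Aw Adc_mult[OF a b] unfolding wab X_def by simp
  have ba: "b $ j = mu * a $ j" if j: "j < n" for j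
  proof -
    have "(b @\<^sub>v X) $ j = b $ j" using b X j by (subst index_append_vec) auto
    moreover have "(mu \<cdot>\<^sub>v w) $ j = mu * a $ j" using w j aj by simp
    ultimately show ?thesis using eqv by simp
  qed
  have Xb: "X $ j = mu * b $ j" if j: "j < n" for j
  proof -
    have "(b @\<^sub>v X) $ (n + j) = X $ j" using b X j by (subst index_append_vec) auto
    moreover have "(mu \<cdot>\<^sub>v w) $ (n + j) = mu * b $ j" using w j bj by simp
    ultimately show ?thesis using eqv by simp
  qed
  have Xc: "X $ j = (\<Sum>k<n. complex_of_real (a2 j k) * a $ k) + (\<Sum>k<n. complex_of_real (a1 j k) * b $ k)"
    if j: "j < n" for j
  proof -
    have "X $ j = (map_mat complex_of_real (L * W2) *\<^sub>v a) $ j + (map_mat complex_of_real (L * W1) *\<^sub>v b) $ j"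
      unfolding X_def using j L W1 W2 a b by simp
    also have "\<dots> = (\<Sum>k<n. complex_of_real (a2 j k) * a $ k) + (\<Sum>k<n. complex_of_real (a1 j k) * b $ k)"
      using cmv_comp[of "L * W2" n a j] cmv_comp[of "L * W1" n b j] L W1 W2 a b j LW2_entry[OF j] LW1_entry[OF j]
      by simp
    finally show ?thesis .
  qed
  obtain i where i: "i < n" "a $ i \<noteq> 0"
  proof (rule ccontr)
    assume "\<not> thesis"
    then have z: "\<forall>j<n. a $ j = 0" using that by blast
    have "w = 0\<^sub>v (n+n)"
    proof (rule eq_vecI)
      fix k assume "k < dim_vec (0\<^sub>v (n+n) :: complex vec)"
      then have k: "k < n+n" by simp
      show "w $ k = 0\<^sub>v (n+n) $ k"
      proof (cases "k < n")
        case True then show ?thesis using z aj k by auto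
      next
        case False
        then have "k - n < n" "k = n + (k - n)" using k by auto
        then show ?thesis using z ba bj k by (metis index_zero_vec(1) mult_zero_right)
      qed
    qed (use w in auto)
    with w0 show False by simp
  qed
  define p where "p = (\<lambda>t j. norm mu ^ t * norm (a $ j))"
  have step: "p (Suc (Suc t)) j \<le> (\<Sum>k<n. a1 j k * p (Suc t) k) + (\<Sum>k<n. a2 j k * p t k)"
    if j: "j < n" for t j
  proof -
    have "norm mu * (norm mu * norm (a $ j)) = norm (X $ j)"
      using Xb[OF j] ba[OF j] by (simp add: norm_mult)
    also have "\<dots> \<le> norm (\<Sum>k<n. complex_of_real (a2 j k) * a $ k) + norm (\<Sum>k<n. complex_of_real (a1 j k) * b $ k)"
      unfolding Xc[OF j] by (rule norm_triangle_ineq)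
    also have "\<dots> \<le> (\<Sum>k<n. a2 j k * norm (a $ k)) + (\<Sum>k<n. a1 j k * norm (b $ k))"
      by (intro add_mono norm_sum_le) (use j l0 W1nn W2nn in auto)
    also have "(\<Sum>k<n. a1 j k * norm (b $ k)) = (\<Sum>k<n. a1 j k * (norm mu * norm (a $ k)))"
      using ba by (intro sum.cong) (auto simp: norm_mult)
    finally have le: "norm mu * (norm mu * norm (a $ j)) \<le> (\<Sum>k<n. a2 j k * norm (a $ k)) + (\<Sum>k<n. a1 j k * (norm mu * norm (a $ k)))" .
    have "p (Suc (Suc t)) j = norm mu ^ t * (norm mu * (norm mu * norm (a $ j)))" unfolding p_def by (simp add: algebra_simps)
    also have "\<dots> \<le> norm mu ^ t * ((\<Sum>k<n. a2 j k * norm (a $ k)) + (\<Sum>k<n. a1 j k * (norm mu * norm (a $ k))))"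
      by (intro mult_left_mono le) auto
    also have "\<dots> = (\<Sum>k<n. a1 j k * p (Suc t) k) + (\<Sum>k<n. a2 j k * p t k)"
      unfolding p_def distrib_left sum_distrib_left
      by (subst add.commute) (intro arg_cong2[where f = "(+)"] sum.cong; simp add: algebra_simps)
    finally show ?thesis .
  qed
  define C where "C = (\<Sum>k<n. norm (a $ k)) + (\<Sum>k<n. norm (b $ k))"
  have init0: "p 0 j \<le> C" if "j < n" for j
  proof -
    have "norm (a $ j) \<le> (\<Sum>k<n. norm (a $ k))" using that by (intro member_le_sum) auto
    moreover have "0 \<le> (\<Sum>k<n. norm (b $ k))" by (simp add: sum_nonneg)
    ultimately show ?thesis unfolding p_def C_def by simp
  qed
  have init1: "p 1 j \<le> C" if j: "j < n" for j
  proof -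
    have "p 1 j = norm (b $ j)" unfolding p_def using ba[OF j] by (simp add: norm_mult)
    moreover have "norm (b $ j) \<le> (\<Sum>k<n. norm (b $ k))" using j by (intro member_le_sum) auto
    moreover have "0 \<le> (\<Sum>k<n. norm (a $ k))" by (simp add: sum_nonneg)
    ultimately show ?thesis unfolding C_def by simp
  qed
  have C0: "0 \<le> C" unfolding C_def by (simp add: sum_nonneg)
  have pnn: "0 \<le> p t j" if "j < n" for t j unfolding p_def by simp
  have "(\<lambda>t. p t i) \<longlonglongrightarrow> 0" by (rule pair_decay[OF EX[OF assms] step init0 init1 C0 pnn i(1)])
  then have "norm mu < 1" unfolding p_def by (rule pow_lim_lt1) (use i in auto)
  then show ?thesis unfolding rho_def eq .
qed

end


context fj begin

lemma UNIQ:
  assumes c: "c3" and y: "y \<in> carrier_vec n" and z: "z \<in> carrier_vec n"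
    and h: "\<forall>i<n. y $ i - z $ i = (\<Sum>j<n. aa i j * (y $ j - z $ j))"
  shows "y = z"
proof (rule eq_vecI)
  fix i assume "i < dim_vec z"
  then have i: "i < n" using z by simp
  define p where "p = (\<lambda>(t::nat) j. \<bar>y $ j - z $ j\<bar>)"
  have step: "p (Suc t) j \<le> (\<Sum>k<n. aa j k * p t k)" if j: "j < n" for t j
  proof -
    have "\<bar>y $ j - z $ j\<bar> = \<bar>\<Sum>k<n. aa j k * (y $ k - z $ k)\<bar>" using h j by metis
    also have "\<dots> \<le> (\<Sum>k<n. aa j k * \<bar>y $ k - z $ k\<bar>)"
      by (rule abs_sum_le) (use j l0 W1nn W2nn in auto)
    finally show ?thesis unfolding p_def by simp
  qed
  define C where "C = (\<Sum>k<n. \<bar>y $ k - z $ k\<bar>)"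
  have init: "p 0 j \<le> C" if "j < n" for j
  proof -
    have "\<bar>y $ j - z $ j\<bar> \<le> C" unfolding C_def using that by (intro member_le_sum) auto
    then show ?thesis unfolding p_def by simp
  qed
  have pnn: "0 \<le> p t j" for t j unfolding p_def by simp
  have "(\<lambda>t. p t i) \<longlonglongrightarrow> 0" by (rule single_decay[OF EX[OF c] step init pnn i])
  then have "\<bar>y $ i - z $ i\<bar> = 0" unfolding p_def by (simp add: LIMSEQ_const_iff)
  then show "y $ i = z $ i" by simp
qed (use y z in auto)

lemma eqA_iff: assumes y: "y \<in> carrier_vec n" and r: "r \<in> carrier_vec n"
  shows "(y = A *\<^sub>v y + r) \<longleftrightarrow> (\<forall>i<n. y $ i = (\<Sum>j<n. aa i j * y $ j) + r $ i)"
proof -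
  have e: "(y = A *\<^sub>v y + r) \<longleftrightarrow> (\<forall>i<n. y $ i = (A *\<^sub>v y + r) $ i)"
    using y r A_car by (simp add: vec_eq_iff)
  have c: "(A *\<^sub>v y + r) $ i = (\<Sum>j<n. aa i j * y $ j) + r $ i" if i: "i < n" for i
    using A_comp[OF y i] r i by simp
  show ?thesis unfolding e using c by simp
qed

lemma eqLW_iff: assumes y: "y \<in> carrier_vec n" and r: "r \<in> carrier_vec n"
  shows "(y = L *\<^sub>v (W1 *\<^sub>v y + W2 *\<^sub>v y) + r) \<longleftrightarrow> (\<forall>i<n. y $ i = (\<Sum>j<n. aa i j * y $ j) + r $ i)"
proof -
  have c: "(L *\<^sub>v (W1 *\<^sub>v y + W2 *\<^sub>v y) + r) $ i = (\<Sum>j<n. aa i j * y $ j) + r $ i" if i: "i < n" for i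
  proof -
    have "(L *\<^sub>v (W1 *\<^sub>v y + W2 *\<^sub>v y) + r) $ i = (L *\<^sub>v (W1 *\<^sub>v y + W2 *\<^sub>v y)) $ i + r $ i"
      using r i by simp
    also have "(L *\<^sub>v (W1 *\<^sub>v y + W2 *\<^sub>v y)) $ i = (\<Sum>j<n. a1 i j * y $ j) + (\<Sum>j<n. a2 i j * y $ j)"
      by (rule LW_comp[OF y y i])
    also have "\<dots> = (\<Sum>j<n. aa i j * y $ j)"
      unfolding sum.distrib[symmetric] by (rule sum.cong) (auto simp: algebra_simps)
    finally show ?thesis .
  qed
  have e: "(y = L *\<^sub>v (W1 *\<^sub>v y + W2 *\<^sub>v y) + r) \<longleftrightarrow> (\<forall>i<n. y $ i = (L *\<^sub>v (W1 *\<^sub>v y + W2 *\<^sub>v y) + r) $ i)"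
    using y r L by (simp add: vec_eq_iff)
  show ?thesis unfolding e using c by simp
qed

lemma conv:
  assumes c: "c3" and s: "s \<in> carrier_vec n"
  shows "(let xbar = the (mat_inverse (1\<^sub>m n - A)) *\<^sub>v ((1\<^sub>m n - L) *\<^sub>v s) in
           invertible_mat (1\<^sub>m n - A)
           \<and> (\<forall>x :: nat \<Rightarrow> real vec.
                 (\<forall>t. x t \<in> carrier_vec n) \<and>
                 (\<forall>t. x (t+2) = L *\<^sub>v (W1 *\<^sub>v x (t+1) + W2 *\<^sub>v x t) + (1\<^sub>m n - L) *\<^sub>v s)
                 \<longrightarrow> (\<forall>i<n. (\<lambda>t. x t $ i) \<longlonglongrightarrow> xbar $ i))
           \<and> (\<forall>x :: nat \<Rightarrow> real vec.
                 (\<forall>t. x t \<in> carrier_vec n) \<and>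
                 (\<forall>t. x (t+1) = A *\<^sub>v x t + (1\<^sub>m n - L) *\<^sub>v s)
                 \<longrightarrow> (\<forall>i<n. (\<lambda>t. x t $ i) \<longlonglongrightarrow> xbar $ i))
           \<and> (\<forall>y \<in> carrier_vec n.
                 y = L *\<^sub>v (W1 *\<^sub>v y + W2 *\<^sub>v y) + (1\<^sub>m n - L) *\<^sub>v s \<longleftrightarrow> y = xbar)
           \<and> (\<forall>y \<in> carrier_vec n.
                 y = A *\<^sub>v y + (1\<^sub>m n - L) *\<^sub>v s \<longleftrightarrow> y = xbar))"
proof -
  define r where "r = (1\<^sub>m n - L) *\<^sub>v s"
  have r: "r \<in> carrier_vec n" unfolding r_def
    by (rule mult_mat_vec_carrier[of _ n n]) (use L s in auto)
  define B where "B = 1\<^sub>m n - A"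
  have B: "B \<in> carrier_mat n n" unfolding B_def by (rule minus_carrier_mat[OF A_car])
  have Bv: "B *\<^sub>v y = y - A *\<^sub>v y" if y: "y \<in> carrier_vec n" for y
    unfolding B_def using minus_mult_distrib_mat_vec[OF one_carrier_mat A_car y] y by simp
  have detB: "det B \<noteq> 0"
  proof
    assume "det B = 0"
    then obtain y where y: "y \<in> carrier_vec n" and y0: "y \<noteq> 0\<^sub>v n" and By: "B *\<^sub>v y = 0\<^sub>v n"
      using det_0_iff_vec_prod_zero[OF B] by auto
    have "\<forall>i<n. y $ i - 0\<^sub>v n $ i = (\<Sum>j<n. aa i j * (y $ j - 0\<^sub>v n $ j))"
    proof (intro allI impI)
      fix i assume i: "i < n"
      have "(B *\<^sub>v y) $ i = y $ i - (A *\<^sub>v y) $ i" using Bv[OF y] y A_car i by simp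
      then have "y $ i = (A *\<^sub>v y) $ i" using By i by simp
      then show "y $ i - 0\<^sub>v n $ i = (\<Sum>j<n. aa i j * (y $ j - 0\<^sub>v n $ j))"
        using A_comp[OF y i] i by simp
    qed
    from UNIQ[OF c y zero_carrier_vec this] y0 show False by simp
  qed
  have "mat_inverse B \<noteq> None"
  proof
    assume "mat_inverse B = None"
    from mat_inverse(1)[OF B this, of "()"] det_non_zero_imp_unit[OF B detB, of "()"]
    show False by simp
  qed
  then obtain Bi where Bi: "mat_inverse B = Some Bi" by auto
  from mat_inverse(2)[OF B Bi] have BBi: "B * Bi = 1\<^sub>m n" and BiB: "Bi * B = 1\<^sub>m n"
    and Bic: "Bi \<in> carrier_mat n n" by auto
  have inv: "invertible_mat B"
    unfolding invertible_mat_def inverts_mat_def using BBi BiB B Bic by auto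
  define xbar where "xbar = Bi *\<^sub>v r"
  have xb: "xbar \<in> carrier_vec n" unfolding xbar_def using Bic r by simp
  have "B *\<^sub>v xbar = (B * Bi) *\<^sub>v r" unfolding xbar_def using B Bic r by simp
  also have "\<dots> = r" using BBi r by simp
  finally have Bx: "xbar - A *\<^sub>v xbar = r" using Bv[OF xb] by simp
  have XB: "\<forall>i<n. xbar $ i = (\<Sum>j<n. aa i j * xbar $ j) + r $ i"
  proof (intro allI impI)
    fix i assume i: "i < n"
    have "(xbar - A *\<^sub>v xbar) $ i = r $ i" using Bx by simp
    then have "xbar $ i - (A *\<^sub>v xbar) $ i = r $ i" using xb A_car i by simp
    then show "xbar $ i = (\<Sum>j<n. aa i j * xbar $ j) + r $ i" using A_comp[OF xb i] by linarith
  qed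
  have P_iff: "(\<forall>i<n. y $ i = (\<Sum>j<n. aa i j * y $ j) + r $ i) \<longleftrightarrow> y = xbar"
    if y: "y \<in> carrier_vec n" for y
  proof
    assume h: "\<forall>i<n. y $ i = (\<Sum>j<n. aa i j * y $ j) + r $ i"
    have "\<forall>i<n. y $ i - xbar $ i = (\<Sum>j<n. aa i j * (y $ j - xbar $ j))"
    proof (intro allI impI)
      fix i assume i: "i < n"
      have "y $ i - xbar $ i = (\<Sum>j<n. aa i j * y $ j) - (\<Sum>j<n. aa i j * xbar $ j)"
        using h[rule_format, OF i] XB[rule_format, OF i] by linarith
      also have "\<dots> = (\<Sum>j<n. aa i j * (y $ j - xbar $ j))"
        unfolding sum_subtractf[symmetric] by (rule sum.cong) (auto simp: algebra_simps)
      finally show "y $ i - xbar $ i = (\<Sum>j<n. aa i j * (y $ j - xbar $ j))" .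
    qed
    then show "y = xbar" by (rule UNIQ[OF c y xb])
  next
    assume "y = xbar" then show "\<forall>i<n. y $ i = (\<Sum>j<n. aa i j * y $ j) + r $ i" using XB by blast
  qed
  have convB: "(\<lambda>t. x t $ i) \<longlonglongrightarrow> xbar $ i"
    if xc: "\<forall>t. x t \<in> carrier_vec n" and rec: "\<forall>t. x (t+1) = A *\<^sub>v x t + r" and i: "i < n" for x i
  proof -
    have xs: "x (Suc t) $ j = (\<Sum>k<n. aa j k * x t $ k) + r $ j" if j: "j < n" for t j
    proof -
      have "x (Suc t) = A *\<^sub>v x t + r" using rec by simp
      then show ?thesis using j r A_car xc A_comp[of "x t" j] by simp
    qed
    define p where "p = (\<lambda>t j. \<bar>x t $ j - xbar $ j\<bar>)"
    have step: "p (Suc t) j \<le> (\<Sum>k<n. aa j k * p t k)" if j: "j < n" for t j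
    proof -
      have e1: "x (Suc t) $ j - xbar $ j = (\<Sum>k<n. aa j k * x t $ k) - (\<Sum>k<n. aa j k * xbar $ k)"
        using xs[OF j, of t] XB[rule_format, OF j] by linarith
      have "x (Suc t) $ j - xbar $ j = (\<Sum>k<n. aa j k * (x t $ k - xbar $ k))"
        unfolding e1 sum_subtractf[symmetric] by (rule sum.cong) (auto simp: algebra_simps)
      then show ?thesis unfolding p_def
        using abs_sum_le[of n "aa j" "\<lambda>k. x t $ k - xbar $ k"] l0 W1nn W2nn j by auto
    qed
    define C where "C = (\<Sum>k<n. \<bar>x 0 $ k - xbar $ k\<bar>)"
    have init: "p 0 j \<le> C" if "j < n" for j
    proof -
      have "\<bar>x 0 $ j - xbar $ j\<bar> \<le> C" unfolding C_def using that by (intro member_le_sum) auto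
      then show ?thesis unfolding p_def by simp
    qed
    have pnn: "0 \<le> p t j" for t j unfolding p_def by simp
    have "(\<lambda>t. p t i) \<longlonglongrightarrow> 0" by (rule single_decay[OF EX[OF c] step init pnn i])
    then have "(\<lambda>t. x t $ i - xbar $ i) \<longlonglongrightarrow> 0" unfolding p_def by (rule tendsto_rabs_zero_cancel)
    then show ?thesis by (rule LIM_zero_cancel)
  qed
  have convA: "(\<lambda>t. x t $ i) \<longlonglongrightarrow> xbar $ i"
    if xc: "\<forall>t. x t \<in> carrier_vec n"
      and rec: "\<forall>t. x (t+2) = L *\<^sub>v (W1 *\<^sub>v x (t+1) + W2 *\<^sub>v x t) + r" and i: "i < n" for x i
  proof -
    have xs: "x (Suc (Suc t)) $ j = (\<Sum>k<n. a1 j k * x (Suc t) $ k) + (\<Sum>k<n. a2 j k * x t $ k) + r $ j"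
      if j: "j < n" for t j
    proof -
      have "x (Suc (Suc t)) = L *\<^sub>v (W1 *\<^sub>v x (Suc t) + W2 *\<^sub>v x t) + r" using rec[rule_format, of t] by simp
      then have "x (Suc (Suc t)) $ j = (L *\<^sub>v (W1 *\<^sub>v x (Suc t) + W2 *\<^sub>v x t)) $ j + r $ j"
        using j r by simp
      then show ?thesis using LW_comp[OF xc[rule_format] xc[rule_format] j] by simp
    qed
    have XB2: "xbar $ j = (\<Sum>k<n. a1 j k * xbar $ k) + (\<Sum>k<n. a2 j k * xbar $ k) + r $ j" if j: "j < n" for j
    proof -
      have "(\<Sum>k<n. aa j k * xbar $ k) = (\<Sum>k<n. a1 j k * xbar $ k) + (\<Sum>k<n. a2 j k * xbar $ k)"
        unfolding sum.distrib[symmetric] by (rule sum.cong) (auto simp: algebra_simps)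
      then show ?thesis using XB[rule_format, OF j] by linarith
    qed
    define p where "p = (\<lambda>t j. \<bar>x t $ j - xbar $ j\<bar>)"
    have step: "p (Suc (Suc t)) j \<le> (\<Sum>k<n. a1 j k * p (Suc t) k) + (\<Sum>k<n. a2 j k * p t k)"
      if j: "j < n" for t j
    proof -
      have "x (Suc (Suc t)) $ j - xbar $ j = (\<Sum>k<n. a1 j k * (x (Suc t) $ k - xbar $ k)) + (\<Sum>k<n. a2 j k * (x t $ k - xbar $ k))"
      proof -
        have e1: "x (Suc (Suc t)) $ j - xbar $ j = ((\<Sum>k<n. a1 j k * x (Suc t) $ k) - (\<Sum>k<n. a1 j k * xbar $ k))
           + ((\<Sum>k<n. a2 j k * x t $ k) - (\<Sum>k<n. a2 j k * xbar $ k))"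
          using xs[OF j, of t] XB2[OF j] by linarith
        show ?thesis unfolding e1 sum_subtractf[symmetric]
          by (intro arg_cong2[where f = "(+)"] sum.cong) (auto simp: algebra_simps)
      qed
      then have "p (Suc (Suc t)) j \<le> \<bar>\<Sum>k<n. a1 j k * (x (Suc t) $ k - xbar $ k)\<bar> + \<bar>\<Sum>k<n. a2 j k * (x t $ k - xbar $ k)\<bar>"
        unfolding p_def by simp
      also have "\<dots> \<le> (\<Sum>k<n. a1 j k * p (Suc t) k) + (\<Sum>k<n. a2 j k * p t k)"
        unfolding p_def by (intro add_mono abs_sum_le) (use j l0 W1nn W2nn in auto)
      finally show ?thesis .
    qed
    define C where "C = (\<Sum>k<n. \<bar>x 0 $ k - xbar $ k\<bar>) + (\<Sum>k<n. \<bar>x 1 $ k - xbar $ k\<bar>)"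
    have init0: "p 0 j \<le> C" if "j < n" for j
    proof -
      have "\<bar>x 0 $ j - xbar $ j\<bar> \<le> (\<Sum>k<n. \<bar>x 0 $ k - xbar $ k\<bar>)" using that by (intro member_le_sum) auto
      moreover have "0 \<le> (\<Sum>k<n. \<bar>x 1 $ k - xbar $ k\<bar>)" by (simp add: sum_nonneg)
      ultimately show ?thesis unfolding p_def C_def by linarith
    qed
    have init1: "p 1 j \<le> C" if "j < n" for j
    proof -
      have "\<bar>x 1 $ j - xbar $ j\<bar> \<le> (\<Sum>k<n. \<bar>x 1 $ k - xbar $ k\<bar>)" using that by (intro member_le_sum) auto
      moreover have "0 \<le> (\<Sum>k<n. \<bar>x 0 $ k - xbar $ k\<bar>)" by (simp add: sum_nonneg)
      ultimately show ?thesis unfolding p_def C_def by linarith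
    qed
    have C0: "0 \<le> C" unfolding C_def by (simp add: sum_nonneg)
    have pnn: "0 \<le> p t j" if "j < n" for t j unfolding p_def by simp
    have "(\<lambda>t. p t i) \<longlonglongrightarrow> 0" by (rule pair_decay[OF EX[OF c] step init0 init1 C0 pnn i])
    then have "(\<lambda>t. x t $ i - xbar $ i) \<longlonglongrightarrow> 0" unfolding p_def by (rule tendsto_rabs_zero_cancel)
    then show ?thesis by (rule LIM_zero_cancel)
  qed
  show ?thesis
    unfolding Let_def B_def[symmetric] Bi option.sel xbar_def[symmetric] r_def[symmetric]
  proof (intro conjI allI impI ballI)
    show "invertible_mat B" by (rule inv)
  next
    fix x :: "nat \<Rightarrow> real vec" and i
    assume "(\<forall>t. x t \<in> carrier_vec n) \<and> (\<forall>t. x (t + 2) = L *\<^sub>v (W1 *\<^sub>v x (t + 1) + W2 *\<^sub>v x t) + r)"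
      and "i < n"
    then show "(\<lambda>t. x t $ i) \<longlonglongrightarrow> xbar $ i" using convA by blast
  next
    fix x :: "nat \<Rightarrow> real vec" and i
    assume "(\<forall>t. x t \<in> carrier_vec n) \<and> (\<forall>t. x (t + 1) = A *\<^sub>v x t + r)" and "i < n"
    then show "(\<lambda>t. x t $ i) \<longlonglongrightarrow> xbar $ i" using convB by blast
  next
    fix y :: "real vec" assume y: "y \<in> carrier_vec n"
    show "(y = L *\<^sub>v (W1 *\<^sub>v y + W2 *\<^sub>v y) + r) = (y = xbar)"
      using eqLW_iff[OF y r] P_iff[OF y] by simp
  next
    fix y :: "real vec" assume y: "y \<in> carrier_vec n"
    show "(y = A *\<^sub>v y + r) = (y = xbar)"
      using eqA_iff[OF y r] P_iff[OF y] by simp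
  qed
qed

end

theorem theorem1:
  fixes n :: nat and L W1 W2 :: "real mat" and s :: "real vec"
  assumes n_pos: "n > 0"
    and L: "L \<in> carrier_mat n n" and W1: "W1 \<in> carrier_mat n n" and W2: "W2 \<in> carrier_mat n n"
    and s: "s \<in> carrier_vec n"
    and L_diag: "diagonal_mat L"
    and L_range: "\<forall>i<n. 0 \<le> L $$ (i,i) \<and> L $$ (i,i) \<le> 1"
    and W1_nonneg: "nonneg_mat W1" and W2_nonneg: "nonneg_mat W2"
    and W_stoch: "row_stochastic n (W1 + W2)"
  shows
    "(rho (Abar_d n L W1 W2) < 1 \<longleftrightarrow> rho (Abar L W1 W2) < 1)
     \<and> (rho (Abar L W1 W2) < 1 \<longleftrightarrow>
          ({i. i < n \<and> L $$ (i,i) < 1} \<noteq> {} \<and>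
           globally_reachable n (W1 + W2) {i. i < n \<and> L $$ (i,i) < 1}))
     \<and> (rho (Abar L W1 W2) < 1 \<longrightarrow>
          (let xbar = the (mat_inverse (1\<^sub>m n - Abar L W1 W2)) *\<^sub>v ((1\<^sub>m n - L) *\<^sub>v s) in
           invertible_mat (1\<^sub>m n - Abar L W1 W2)
           \<and> (\<forall>x :: nat \<Rightarrow> real vec.
                 (\<forall>t. x t \<in> carrier_vec n) \<and>
                 (\<forall>t. x (t+2) = L *\<^sub>v (W1 *\<^sub>v x (t+1) + W2 *\<^sub>v x t) + (1\<^sub>m n - L) *\<^sub>v s)
                 \<longrightarrow> (\<forall>i<n. (\<lambda>t. x t $ i) \<longlonglongrightarrow> xbar $ i))
           \<and> (\<forall>x :: nat \<Rightarrow> real vec.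
                 (\<forall>t. x t \<in> carrier_vec n) \<and>
                 (\<forall>t. x (t+1) = Abar L W1 W2 *\<^sub>v x t + (1\<^sub>m n - L) *\<^sub>v s)
                 \<longrightarrow> (\<forall>i<n. (\<lambda>t. x t $ i) \<longlonglongrightarrow> xbar $ i))
           \<and> (\<forall>y \<in> carrier_vec n.
                 y = L *\<^sub>v (W1 *\<^sub>v y + W2 *\<^sub>v y) + (1\<^sub>m n - L) *\<^sub>v s \<longleftrightarrow> y = xbar)
           \<and> (\<forall>y \<in> carrier_vec n.
                 y = Abar L W1 W2 *\<^sub>v y + (1\<^sub>m n - L) *\<^sub>v s \<longleftrightarrow> y = xbar)))"
proof -
  interpret fj n L W1 W2
    using n_pos L W1 W2 L_diag L_range W1_nonneg W2_nonneg W_stoch by (simp add: fj_def)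
  have e1: "rho (Abar L W1 W2) < 1 \<longleftrightarrow> c3" using rhoA_lt rhoA_ge by force
  have e2: "rho (Abar_d n L W1 W2) < 1 \<longleftrightarrow> c3" using rhoAd_lt rhoAd_ge by force
  have c3e: "c3 \<longleftrightarrow> ({i. i < n \<and> L $$ (i,i) < 1} \<noteq> {} \<and>
           globally_reachable n (W1 + W2) {i. i < n \<and> L $$ (i,i) < 1})" by (rule c3_def)
  show ?thesis
  proof (intro conjI impI)
    show "rho (Abar_d n L W1 W2) < 1 \<longleftrightarrow> rho (Abar L W1 W2) < 1" using e1 e2 by blast
    show "rho (Abar L W1 W2) < 1 \<longleftrightarrow> ({i. i < n \<and> L $$ (i,i) < 1} \<noteq> {} \<and>
           globally_reachable n (W1 + W2) {i. i < n \<and> L $$ (i,i) < 1})" using e1 c3e by blast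
  next
    assume "rho (Abar L W1 W2) < 1"
    then have "c3" using e1 by blast
    from conv[OF this s] show "let xbar = the (mat_inverse (1\<^sub>m n - Abar L W1 W2)) *\<^sub>v ((1\<^sub>m n - L) *\<^sub>v s) in
           invertible_mat (1\<^sub>m n - Abar L W1 W2)
           \<and> (\<forall>x :: nat \<Rightarrow> real vec.
                 (\<forall>t. x t \<in> carrier_vec n) \<and>
                 (\<forall>t. x (t+2) = L *\<^sub>v (W1 *\<^sub>v x (t+1) + W2 *\<^sub>v x t) + (1\<^sub>m n - L) *\<^sub>v s)
                 \<longrightarrow> (\<forall>i<n. (\<lambda>t. x t $ i) \<longlonglongrightarrow> xbar $ i))
           \<and> (\<forall>x :: nat \<Rightarrow> real vec.
                 (\<forall>t. x t \<in> carrier_vec n) \<and>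
                 (\<forall>t. x (t+1) = Abar L W1 W2 *\<^sub>v x t + (1\<^sub>m n - L) *\<^sub>v s)
                 \<longrightarrow> (\<forall>i<n. (\<lambda>t. x t $ i) \<longlonglongrightarrow> xbar $ i))
           \<and> (\<forall>y \<in> carrier_vec n.
                 y = L *\<^sub>v (W1 *\<^sub>v y + W2 *\<^sub>v y) + (1\<^sub>m n - L) *\<^sub>v s \<longleftrightarrow> y = xbar)
           \<and> (\<forall>y \<in> carrier_vec n.
                 y = Abar L W1 W2 *\<^sub>v y + (1\<^sub>m n - L) *\<^sub>v s \<longleftrightarrow> y = xbar)" .
  qed
qed

end
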